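(* Let $H$ be a planar graph and let $C_1,C_2$ be two different simple cycles in $H$ such that one of them has length $5$ and the other has length at most $5$. If $H$ does not contain any removable cycle of length at most $10$, then $C_1$ and $C_2$ are edge-disjoint.
   Context: A simple cycle in a graph $H$ is a sequence $(v_1,\dots,v_k)$ of $k>2$ distinct vertices with consecutive vertices adjacent and $v_k$ adjacent to $v_1$; $V(C)$, $E(C)$ are its vertex and edge sets and its length is $|V(C)|$. Two cycles are different if their edge sets differ. A simple cycle $C$ in $H$ is removable if the induced subgraph $H[V(C)]$ is neither isomorphic to a complete graph nor to a cycle graph of odd length. *)

theory Defs
  imports "HOL-Analysis.Analysis"
begin

definition simple_graph :: "'a set \<Rightarrow> 'a set set \<Rightarrow> bool" where
  "simple_graph V E \<longleftrightarrow> finite V \<and>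
     (\<forall>e\<in>E. \<exists>u v. e = {u, v} \<and> u \<noteq> v \<and> u \<in> V \<and> v \<in> V)"

definition planar :: "'a set \<Rightarrow> 'a set set \<Rightarrow> bool" where
  "planar V E \<longleftrightarrow> (\<exists>(pos :: 'a \<Rightarrow> complex) (\<gamma> :: 'a set \<Rightarrow> real \<Rightarrow> complex).
     inj_on pos V \<and>
     (\<forall>e\<in>E. arc (\<gamma> e) \<and> {pathstart (\<gamma> e), pathfinish (\<gamma> e)} = pos ` e) \<and>
     (\<forall>e\<in>E. \<forall>e'\<in>E. e \<noteq> e' \<longrightarrow>
         path_image (\<gamma> e) \<inter> path_image (\<gamma> e') \<subseteq> pos ` (e \<inter> e')) \<and>
     (\<forall>e\<in>E. \<forall>v\<in>V. v \<notin> e \<longrightarrow> pos v \<notin> path_image (\<gamma> e)))"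

definition simple_cycle :: "'a set set \<Rightarrow> 'a list \<Rightarrow> bool" where
  "simple_cycle E cs \<longleftrightarrow> length cs > 2 \<and> distinct cs \<and>
     (\<forall>i < length cs. {cs ! i, cs ! ((i + 1) mod length cs)} \<in> E)"

definition cycle_edges :: "'a list \<Rightarrow> 'a set set" where
  "cycle_edges cs = {{cs ! i, cs ! ((i + 1) mod length cs)} | i. i < length cs}"

definition induced_edges :: "'a set set \<Rightarrow> 'a set \<Rightarrow> 'a set set" where
  "induced_edges E S = {e \<in> E. e \<subseteq> S}"

definition graph_iso :: "'a set \<Rightarrow> 'a set set \<Rightarrow> 'b set \<Rightarrow> 'b set set \<Rightarrow> bool" where
  "graph_iso V1 E1 V2 E2 \<longleftrightarrow> (\<exists>f. bij_betw f V1 V2 \<and>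
     (\<forall>u\<in>V1. \<forall>v\<in>V1. {u, v} \<in> E1 \<longleftrightarrow> {f u, f v} \<in> E2))"

definition complete_graph_edges :: "nat \<Rightarrow> nat set set" where
  "complete_graph_edges n = {{i, j} | i j. i < n \<and> j < n \<and> i \<noteq> j}"

definition cycle_graph_edges :: "nat \<Rightarrow> nat set set" where
  "cycle_graph_edges n = {{i, (i + 1) mod n} | i. i < n}"

definition is_complete_graph :: "'a set \<Rightarrow> 'a set set \<Rightarrow> bool" where
  "is_complete_graph V E \<longleftrightarrow> (\<exists>n. graph_iso V E {0..<n} (complete_graph_edges n))"

definition is_odd_cycle_graph :: "'a set \<Rightarrow> 'a set set \<Rightarrow> bool" where
  "is_odd_cycle_graph V E \<longleftrightarrow>
     (\<exists>n. n \<ge> 3 \<and> odd n \<and> graph_iso V E {0..<n} (cycle_graph_edges n))"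

definition removable :: "'a set set \<Rightarrow> 'a list \<Rightarrow> bool" where
  "removable E cs \<longleftrightarrow> simple_cycle E cs \<and>
     \<not> is_complete_graph (set cs) (induced_edges E (set cs)) \<and>
     \<not> is_odd_cycle_graph (set cs) (induced_edges E (set cs))"

end

theory Submission
  imports Defs
begin

lemma arc_ends_closure:
  assumes "arc d"
  shows "pathstart d \<in> closure (path_image d - {pathstart d, pathfinish d})"
    and "pathfinish d \<in> closure (path_image d - {pathstart d, pathfinish d})"
proof -
  let ?D = "path_image d - {pathstart d, pathfinish d}"
  have inj: "inj_on d {0..1}" and cont: "continuous_on {0..1} d"
    using assms by (auto simp: arc_def path_def)
  have "d ` {0<..<1} \<subseteq> ?D"
  proof
    fix z assume "z \<in> d ` {0<..<1}"
    then obtain t where t: "t \<in> {0<..<1::real}" "z = d t" by auto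
    have "d t \<noteq> d 0" "d t \<noteq> d 1"
      using inj t by (auto dest: inj_onD)
    then show "z \<in> ?D" using t by (auto simp: path_image_def pathstart_def pathfinish_def)
  qed
  then have "d ` {0<..<1} \<subseteq> closure ?D" using closure_subset by blast
  then have "d ` closure {0<..<1} \<subseteq> closure ?D"
    by (intro image_closure_subset) (auto simp: cont)
  then have "d ` {0..1} \<subseteq> closure ?D" by simp
  then show "pathstart d \<in> closure ?D" "pathfinish d \<in> closure ?D"
    by (auto simp: pathstart_def pathfinish_def)
qed

lemma connected_split:
  assumes "connected S" "S \<subseteq> A \<union> B" "open A" "open B" "A \<inter> B = {}"
  shows "S \<subseteq> A \<or> S \<subseteq> B"
  using connectedD[OF assms(1,3,4)] assms by blast

lemma jordan2:
  fixes p1 p2 :: "real \<Rightarrow> complex"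
  assumes "arc p1" "arc p2" "pathstart p1 = a" "pathfinish p1 = b"
    "pathstart p2 = a" "pathfinish p2 = b" "path_image p1 \<inter> path_image p2 = {a,b}"
  shows "open (inside (path_image p1 \<union> path_image p2))"
    "open (outside (path_image p1 \<union> path_image p2))"
    "connected (inside (path_image p1 \<union> path_image p2))"
    "connected (outside (path_image p1 \<union> path_image p2))"
    "inside (path_image p1 \<union> path_image p2) \<noteq> {}"
    "bounded (inside (path_image p1 \<union> path_image p2))"
    "frontier (inside (path_image p1 \<union> path_image p2)) = path_image p1 \<union> path_image p2"
    "frontier (outside (path_image p1 \<union> path_image p2)) = path_image p1 \<union> path_image p2"
    "closed (path_image p1 \<union> path_image p2)"
proof -
  have sp: "simple_path (p1 +++ reversepath p2)"
    using assms by (auto simp: simple_path_join_loop_eq arc_simple_path simple_path_reversepath)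
  have e: "path_image (p1 +++ reversepath p2) = path_image p1 \<union> path_image p2"
    using assms by (simp add: path_image_join)
  have l: "pathfinish (p1 +++ reversepath p2) = pathstart (p1 +++ reversepath p2)"
    using assms by simp
  note J = Jordan_inside_outside[OF sp l, unfolded e]
  show "open (inside (path_image p1 \<union> path_image p2))"
    "open (outside (path_image p1 \<union> path_image p2))"
    "connected (inside (path_image p1 \<union> path_image p2))"
    "connected (outside (path_image p1 \<union> path_image p2))"
    "inside (path_image p1 \<union> path_image p2) \<noteq> {}"
    "bounded (inside (path_image p1 \<union> path_image p2))"
    "frontier (inside (path_image p1 \<union> path_image p2)) = path_image p1 \<union> path_image p2"
    "frontier (outside (path_image p1 \<union> path_image p2)) = path_image p1 \<union> path_image p2"
    using J by auto
  show "closed (path_image p1 \<union> path_image p2)"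
    using assms by (intro closed_Un closed_arc_image) 
qed

lemma arc_endless_props:
  fixes d :: "real \<Rightarrow> complex"
  assumes "arc d"
  shows "connected (path_image d - {pathstart d, pathfinish d})"
    "path_image d - {pathstart d, pathfinish d} \<noteq> {}"
  using arc_imp_simple_path[OF assms] connected_simple_path_endless nonempty_simple_path_endless by blast+

lemma cross_inside:
  fixes p1 p2 c d :: "real \<Rightarrow> complex"
  assumes ap1: "arc p1" and ap2: "arc p2" and ac: "arc c" and ad: "arc d"
    and s1: "pathstart p1 = a" and f1: "pathfinish p1 = b"
    and s2: "pathstart p2 = a" and f2: "pathfinish p2 = b"
    and sc: "pathstart c = a" and fc: "pathfinish c = b"
    and sd: "pathstart d = x" and fd: "pathfinish d = y"
    and i12: "path_image p1 \<inter> path_image p2 = {a,b}"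
    and i1c: "path_image p1 \<inter> path_image c = {a,b}"
    and i2c: "path_image p2 \<inter> path_image c = {a,b}"
    and x1: "x \<in> path_image p1" and xab: "x \<notin> {a,b}"
    and y2: "y \<in> path_image p2" and yab: "y \<notin> {a,b}"
    and dJ: "path_image d \<inter> (path_image p1 \<union> path_image p2) \<subseteq> {x,y}"
    and dc: "path_image d \<inter> path_image c = {}"
    and dI: "path_image d - {x,y} \<subseteq> inside (path_image p1 \<union> path_image p2)"
    and cI: "path_image c - {a,b} \<subseteq> inside (path_image p1 \<union> path_image p2)"
    and ab: "a \<noteq> b"
  shows False
proof -
  let ?J = "path_image p1 \<union> path_image p2"
  let ?I1 = "inside (path_image p1 \<union> path_image c)"
  let ?I2 = "inside (path_image p2 \<union> path_image c)"
  let ?D = "path_image d - {x,y}"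
  have ne: "path_image c \<inter> inside ?J \<noteq> {}"
    using arc_endless_props(2)[OF ac] cI sc fc by blast
  obtain sp1: "?I1 \<inter> ?I2 = {}" and sp2: "?I1 \<union> ?I2 \<union> (path_image c - {a,b}) = inside ?J"
    using split_inside_simple_closed_curve[OF arc_imp_simple_path[OF ap1] s1 f1 arc_imp_simple_path[OF ap2] s2 f2
       arc_imp_simple_path[OF ac] sc fc ab i12 i1c i2c ne] by blast
  have o1: "open ?I1" using jordan2[OF ap1 ac s1 f1 sc fc i1c] by blast
  have o2: "open ?I2" using jordan2[OF ap2 ac s2 f2 sc fc i2c] by blast
  have cl1: "closed (path_image p1 \<union> path_image c)" using jordan2[OF ap1 ac s1 f1 sc fc i1c] by blast
  have cl2: "closed (path_image p2 \<union> path_image c)" using jordan2[OF ap2 ac s2 f2 sc fc i2c] by blast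
  have cD: "connected ?D" using arc_endless_props(1)[OF ad] sd fd by simp
  have "?D \<subseteq> ?I1 \<union> ?I2" using sp2 dI dc by blast
  then have "?D \<subseteq> ?I1 \<or> ?D \<subseteq> ?I2" using connected_split[OF cD _ o1 o2 sp1] by blast
  have noJ: "inside ?J \<inter> ?J = {}" by (rule inside_no_overlap)
  have yJ: "y \<in> ?J" and xJ: "x \<in> ?J" using x1 y2 by auto
  have yn1: "y \<notin> path_image p1" using y2 yab i12 by blast
  have yn2: "y \<notin> path_image c" using y2 yab i2c by blast
  have xn1: "x \<notin> path_image p2" using x1 xab i12 by blast
  have xn2: "x \<notin> path_image c" using x1 xab i1c by blast
  have yD: "y \<in> closure ?D" using arc_ends_closure(2)[OF ad] sd fd by simp
  have xD: "x \<in> closure ?D" using arc_ends_closure(1)[OF ad] sd fd by simp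
  show False
    using \<open>?D \<subseteq> ?I1 \<or> ?D \<subseteq> ?I2\<close>
  proof
    assume "?D \<subseteq> ?I1"
    then have "closure ?D \<subseteq> closure ?I1" by (rule closure_mono)
    also have "\<dots> \<subseteq> path_image p1 \<union> path_image c \<union> ?I1" using closure_inside_subset[OF cl1] by blast
    finally have "y \<in> path_image p1 \<union> path_image c \<union> ?I1" using yD by blast
    then have "y \<in> inside ?J" using yn1 yn2 sp2 by blast
    then show False using yJ noJ by blast
  next
    assume "?D \<subseteq> ?I2"
    then have "closure ?D \<subseteq> closure ?I2" by (rule closure_mono)
    also have "\<dots> \<subseteq> path_image p2 \<union> path_image c \<union> ?I2" using closure_inside_subset[OF cl2] by blast
    finally have "x \<in> path_image p2 \<union> path_image c \<union> ?I2" using xD by blast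
    then have "x \<in> inside ?J" using xn1 xn2 sp2 by blast
    then show False using xJ noJ by blast
  qed
qed


lemma disj_insides:
  fixes p1 p2 p3 :: "real \<Rightarrow> complex"
  assumes ap1: "arc p1" and ap2: "arc p2" and ap3: "arc p3"
    and s1: "pathstart p1 = a" and f1: "pathfinish p1 = b"
    and s2: "pathstart p2 = a" and f2: "pathfinish p2 = b"
    and s3: "pathstart p3 = a" and f3: "pathfinish p3 = b"
    and i12: "path_image p1 \<inter> path_image p2 = {a,b}"
    and i13: "path_image p1 \<inter> path_image p3 = {a,b}"
    and i23: "path_image p2 \<inter> path_image p3 = {a,b}"
    and h3: "path_image p3 \<inter> inside (path_image p1 \<union> path_image p2) = {}"
    and h2: "path_image p2 \<inter> inside (path_image p1 \<union> path_image p3) = {}"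
  shows "inside (path_image p1 \<union> path_image p2) \<inter> inside (path_image p1 \<union> path_image p3) = {}"
proof -
  let ?I12 = "inside (path_image p1 \<union> path_image p2)"
  let ?I13 = "inside (path_image p1 \<union> path_image p3)"
  let ?O13 = "outside (path_image p1 \<union> path_image p3)"
  note J12 = jordan2[OF ap1 ap2 s1 f1 s2 f2 i12]
  note J13 = jordan2[OF ap1 ap3 s1 f1 s3 f3 i13]
  have "?I12 \<subseteq> ?I13 \<union> ?O13"
    using h3 inside_no_overlap[of "path_image p1 \<union> path_image p2"] inside_Un_outside[of "path_image p1 \<union> path_image p3"]
    by blast
  then have "?I12 \<subseteq> ?I13 \<or> ?I12 \<subseteq> ?O13"
    using connected_split[OF J12(3) _ J13(1) J13(2)] inside_Int_outside by blast
  then show ?thesis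
  proof
    assume sub: "?I12 \<subseteq> ?I13"
    obtain z where z: "z \<in> path_image p2" "z \<notin> {a,b}"
      using arc_endless_props(2)[OF ap2] s2 f2 by blast
    have "z \<in> frontier ?I12" using J12(7) z by blast
    then have "z \<in> closure ?I12" by (simp add: frontier_def)
    also have "\<dots> \<subseteq> closure ?I13" using sub by (rule closure_mono)
    also have "\<dots> \<subseteq> (path_image p1 \<union> path_image p3) \<union> ?I13" using closure_inside_subset[OF J13(9)] .
    finally have "z \<in> ?I13" using z i12 i23 by blast
    then show ?thesis using z h2 by blast
  next
    assume "?I12 \<subseteq> ?O13"
    then show ?thesis using inside_Int_outside by blast
  qed
qed

lemma theta0:
  fixes p1 p2 p3 :: "real \<Rightarrow> complex"
  assumes ap1: "arc p1" and ap2: "arc p2" and ap3: "arc p3"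
    and s1: "pathstart p1 = a" and f1: "pathfinish p1 = b"
    and s2: "pathstart p2 = a" and f2: "pathfinish p2 = b"
    and s3: "pathstart p3 = a" and f3: "pathfinish p3 = b"
    and i12: "path_image p1 \<inter> path_image p2 = {a,b}"
    and i13: "path_image p1 \<inter> path_image p3 = {a,b}"
    and i23: "path_image p2 \<inter> path_image p3 = {a,b}"
  shows "path_image p3 \<inter> inside (path_image p1 \<union> path_image p2) \<noteq> {} \<or>
         path_image p2 \<inter> inside (path_image p1 \<union> path_image p3) \<noteq> {} \<or>
         path_image p1 \<inter> inside (path_image p2 \<union> path_image p3) \<noteq> {}"
proof (rule ccontr)
  assume "\<not> ?thesis"
  then have h3: "path_image p3 \<inter> inside (path_image p1 \<union> path_image p2) = {}"
    and h2: "path_image p2 \<inter> inside (path_image p1 \<union> path_image p3) = {}"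
    and h1: "path_image p1 \<inter> inside (path_image p2 \<union> path_image p3) = {}" by auto
  let ?P1 = "path_image p1" let ?P2 = "path_image p2" let ?P3 = "path_image p3"
  let ?I12 = "inside (?P1 \<union> ?P2)"
  let ?I13 = "inside (?P1 \<union> ?P3)"
  let ?I23 = "inside (?P2 \<union> ?P3)"
  note J12 = jordan2[OF ap1 ap2 s1 f1 s2 f2 i12]
  note J13 = jordan2[OF ap1 ap3 s1 f1 s3 f3 i13]
  note J23 = jordan2[OF ap2 ap3 s2 f2 s3 f3 i23]
  have d1: "?I12 \<inter> ?I13 = {}"
    by (rule disj_insides[OF ap1 ap2 ap3 s1 f1 s2 f2 s3 f3 i12 i13 i23 h3 h2])
  have d2: "?I12 \<inter> ?I23 = {}"
    using disj_insides[OF ap2 ap1 ap3 s2 f2 s1 f1 s3 f3 _ i23 i13] i12 h3 h1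
    by (simp add: Int_commute Un_commute)
  have d3: "?I13 \<inter> ?I23 = {}"
    using disj_insides[OF ap3 ap1 ap2 s3 f3 s1 f1 s2 f2 _ _ i12] i13 i23 h2 h1
    by (simp add: Int_commute Un_commute)
  define S where "S = closure ?I12"
  define T where "T = closure ?I13"
  have S: "S = ?I12 \<union> ?P1 \<union> ?P2" unfolding S_def using closure_Un_frontier J12(7) by auto
  have T: "T = ?I13 \<union> ?P1 \<union> ?P3" unfolding T_def using closure_Un_frontier J13(7) by auto
  have abP1: "a \<in> ?P1" "b \<in> ?P1" using s1 f1 by auto
  have "S \<inter> T = ?P1"
  proof
    show "S \<inter> T \<subseteq> ?P1"
    proof
      fix z assume "z \<in> S \<inter> T"
      then have z1: "z \<in> ?I12 \<or> z \<in> ?P1 \<or> z \<in> ?P2" and z2: "z \<in> ?I13 \<or> z \<in> ?P1 \<or> z \<in> ?P3"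
        unfolding S T by auto
      show "z \<in> ?P1"
      proof (rule ccontr)
        assume "z \<notin> ?P1"
        have e1: "z \<notin> ?I12 \<or> z \<notin> ?I13" using d1 by blast
        have e2: "z \<notin> ?I12 \<or> z \<notin> ?P3" using h3 by blast
        have e3: "z \<notin> ?P2 \<or> z \<notin> ?I13" using h2 by blast
        have e4: "z \<in> ?P2 \<Longrightarrow> z \<in> ?P3 \<Longrightarrow> z = a \<or> z = b" using i23 by blast
        show False using z1 z2 e1 e2 e3 e4 abP1 \<open>z \<notin> ?P1\<close> by metis
      qed
    qed
    show "?P1 \<subseteq> S \<inter> T" unfolding S T by blast
  qed
  then have cST: "connected (S \<inter> T)" using ap1 by (simp add: arc_imp_path connected_path_image)
  have compS: "compact S" unfolding S_def using J12(6) by (simp add: compact_closure)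
  have clT: "closed T" unfolding T_def by simp
  have "- S = outside (?P1 \<union> ?P2)" unfolding S by (auto simp: outside_inside)
  then have cS: "connected (- S)" using J12(4) by simp
  have "- T = outside (?P1 \<union> ?P3)" unfolding T by (auto simp: outside_inside)
  then have cT: "connected (- T)" using J13(4) by simp
  have cW: "connected (- (S \<union> T))"
    by (rule Janiszewski_connected[OF compS clT cST cS cT])
  have "- (S \<union> T) \<subseteq> ?I23 \<union> outside (?P2 \<union> ?P3)"
    using inside_Un_outside[of "?P2 \<union> ?P3"] unfolding S T by blast
  then have W: "- (S \<union> T) \<subseteq> ?I23 \<or> - (S \<union> T) \<subseteq> outside (?P2 \<union> ?P3)"
    using connected_split[OF cW _ J23(1) J23(2)] inside_Int_outside by blast
  have "?I23 \<inter> (?P2 \<union> ?P3) = {}" by (rule inside_no_overlap)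
  then have "?I23 \<subseteq> - (S \<union> T)"
    unfolding S T using d2 d3 h1 by blast
  have bST: "bounded (S \<union> T)"
    unfolding S_def T_def using J12(6) J13(6) by (simp add: bounded_closure)
  show False
    using W
  proof
    assume "- (S \<union> T) \<subseteq> ?I23"
    then have "bounded (- (S \<union> T))" using J23(6) bounded_subset by blast
    then show False using cobounded_imp_unbounded bST by blast
  next
    assume "- (S \<union> T) \<subseteq> outside (?P2 \<union> ?P3)"
    then show False using \<open>?I23 \<subseteq> - (S \<union> T)\<close> J23(5) inside_Int_outside by blast
  qed
qed


lemma cross_outside_sub:
  fixes p1 p2 c d :: "real \<Rightarrow> complex"
  assumes ap1: "arc p1" and ap2: "arc p2" and ac: "arc c" and ad: "arc d"
    and s1: "pathstart p1 = a" and f1: "pathfinish p1 = b"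
    and s2: "pathstart p2 = a" and f2: "pathfinish p2 = b"
    and sc: "pathstart c = a" and fc: "pathfinish c = b"
    and sd: "pathstart d = x" and fd: "pathfinish d = y"
    and i12: "path_image p1 \<inter> path_image p2 = {a,b}"
    and i1c: "path_image p1 \<inter> path_image c = {a,b}"
    and i2c: "path_image p2 \<inter> path_image c = {a,b}"
    and x1: "x \<in> path_image p1" and xab: "x \<notin> {a,b}"
    and y2: "y \<in> path_image p2" and yab: "y \<notin> {a,b}"
    and dJ: "path_image d \<inter> (path_image p1 \<union> path_image p2) \<subseteq> {x,y}"
    and dc: "path_image d \<inter> path_image c = {}"
    and dO: "path_image d - {x,y} \<subseteq> outside (path_image p1 \<union> path_image p2)"
    and ab: "a \<noteq> b"
    and ne: "path_image p2 \<inter> inside (path_image p1 \<union> path_image c) \<noteq> {}"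
  shows False
proof -
  let ?P1 = "path_image p1" let ?P2 = "path_image p2" let ?C = "path_image c"
  let ?J = "?P1 \<union> ?P2"
  let ?I1c = "inside (?P1 \<union> ?C)"
  let ?Ic2 = "inside (?C \<union> ?P2)"
  let ?D = "path_image d - {x,y}"
  have i1c': "?C \<inter> ?P2 = {a,b}" using i2c by blast
  obtain sp1: "inside ?J \<inter> ?Ic2 = {}" and sp2: "inside ?J \<union> ?Ic2 \<union> (?P2 - {a,b}) = ?I1c"
    using split_inside_simple_closed_curve[OF arc_imp_simple_path[OF ap1] s1 f1 arc_imp_simple_path[OF ac] sc fc
       arc_imp_simple_path[OF ap2] s2 f2 ab i1c i12 i1c' ne] by blast
  note J1c = jordan2[OF ap1 ac s1 f1 sc fc i1c]
  note Jc2 = jordan2[OF ac ap2 sc fc s2 f2 i1c']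
  have cD: "connected ?D" using arc_endless_props(1)[OF ad] sd fd by simp
  have "?D \<subseteq> - (?P1 \<union> ?C)" using dJ dc by blast
  then have "?D \<subseteq> ?I1c \<union> outside (?P1 \<union> ?C)" using inside_Un_outside by blast
  then have cases: "?D \<subseteq> ?I1c \<or> ?D \<subseteq> outside (?P1 \<union> ?C)"
    using connected_split[OF cD _ J1c(1) J1c(2)] inside_Int_outside by blast
  have yD: "y \<in> closure ?D" using arc_ends_closure(2)[OF ad] sd fd by simp
  have xD: "x \<in> closure ?D" using arc_ends_closure(1)[OF ad] sd fd by simp
  have "y \<in> ?I1c" using sp2 y2 yab by blast
  then have "?I1c \<inter> closure ?D \<noteq> {}" using yD by blast
  then have "?I1c \<inter> ?D \<noteq> {}" using open_Int_closure_eq_empty[OF J1c(1)] by blast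
  then have D1: "?D \<subseteq> ?I1c" using cases inside_Int_outside by blast
  have "?D \<inter> inside ?J = {}" using dO inside_Int_outside by blast
  moreover have "?D \<inter> ?P2 = {}" using dJ by blast
  ultimately have D2: "?D \<subseteq> ?Ic2" using D1 sp2 by blast
  have "closure ?D \<subseteq> closure ?Ic2" using D2 by (rule closure_mono)
  also have "\<dots> \<subseteq> (?C \<union> ?P2) \<union> ?Ic2" using closure_inside_subset[OF Jc2(9)] .
  finally have "x \<in> (?C \<union> ?P2) \<union> ?Ic2" using xD by blast
  moreover have "x \<notin> ?C" using x1 xab i1c by blast
  moreover have "x \<notin> ?P2" using x1 xab i12 by blast
  ultimately have "x \<in> ?I1c" using sp2 by blast
  moreover have "?I1c \<inter> (?P1 \<union> ?C) = {}" by (rule inside_no_overlap)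
  ultimately show False using x1 by blast
qed

lemma cross_outside:
  fixes p1 p2 c d :: "real \<Rightarrow> complex"
  assumes ap1: "arc p1" and ap2: "arc p2" and ac: "arc c" and ad: "arc d"
    and s1: "pathstart p1 = a" and f1: "pathfinish p1 = b"
    and s2: "pathstart p2 = a" and f2: "pathfinish p2 = b"
    and sc: "pathstart c = a" and fc: "pathfinish c = b"
    and sd: "pathstart d = x" and fd: "pathfinish d = y"
    and i12: "path_image p1 \<inter> path_image p2 = {a,b}"
    and i1c: "path_image p1 \<inter> path_image c = {a,b}"
    and i2c: "path_image p2 \<inter> path_image c = {a,b}"
    and x1: "x \<in> path_image p1" and xab: "x \<notin> {a,b}"
    and y2: "y \<in> path_image p2" and yab: "y \<notin> {a,b}"
    and dJ: "path_image d \<inter> (path_image p1 \<union> path_image p2) \<subseteq> {x,y}"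
    and dc: "path_image d \<inter> path_image c = {}"
    and dO: "path_image d - {x,y} \<subseteq> outside (path_image p1 \<union> path_image p2)"
    and cO: "path_image c - {a,b} \<subseteq> outside (path_image p1 \<union> path_image p2)"
    and ab: "a \<noteq> b"
  shows False
proof -
  let ?P1 = "path_image p1" let ?P2 = "path_image p2" let ?C = "path_image c"
  have "?C \<inter> inside (?P1 \<union> ?P2) = {}"
  proof -
    have "a \<in> ?P1" "b \<in> ?P1" using s1 f1 by auto
    moreover have "inside (?P1 \<union> ?P2) \<inter> (?P1 \<union> ?P2) = {}" by (rule inside_no_overlap)
    moreover have "outside (?P1 \<union> ?P2) \<inter> inside (?P1 \<union> ?P2) = {}" using inside_Int_outside by blast
    ultimately show ?thesis using cO by blast
  qed
  then have "?P2 \<inter> inside (?P1 \<union> ?C) \<noteq> {} \<or> ?P1 \<inter> inside (?P2 \<union> ?C) \<noteq> {}"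
    using theta0[OF ap1 ap2 ac s1 f1 s2 f2 sc fc i12 i1c i2c] by blast
  then show False
  proof
    assume ne: "?P2 \<inter> inside (?P1 \<union> ?C) \<noteq> {}"
    show False by (rule cross_outside_sub[OF ap1 ap2 ac ad s1 f1 s2 f2 sc fc sd fd i12 i1c i2c x1 xab y2 yab dJ dc dO ab ne])
  next
    assume ne: "?P1 \<inter> inside (?P2 \<union> ?C) \<noteq> {}"
    have i21: "?P2 \<inter> ?P1 = {a,b}" using i12 by blast
    have ard: "arc (reversepath d)" using ad by (simp add: arc_reversepath)
    have dJ': "path_image (reversepath d) \<inter> (?P2 \<union> ?P1) \<subseteq> {y,x}" using dJ by auto
    have dc': "path_image (reversepath d) \<inter> ?C = {}" using dc by simp
    have dO': "path_image (reversepath d) - {y,x} \<subseteq> outside (?P2 \<union> ?P1)"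
      using dO by (simp add: Un_commute insert_commute)
    show False
      by (rule cross_outside_sub[OF ap2 ap1 ac ard s2 f2 s1 f1 sc fc _ _ i21 i2c i1c y2 yab x1 xab dJ' dc' dO' ab ne])
        (simp_all add: sd fd)
  qed
qed

lemma K5_pair:
  fixes g :: "'a \<Rightarrow> 'a \<Rightarrow> real \<Rightarrow> complex" and pos :: "'a \<Rightarrow> complex"
  assumes dist: "distinct [v1,v2,v3,v4,v5]"
    and K: "K = {v1,v2,v3,v4,v5}"
    and G1: "\<And>x y. x \<in> K \<Longrightarrow> y \<in> K \<Longrightarrow> x \<noteq> y \<Longrightarrow> arc (g x y) \<and> pathstart (g x y) = pos x \<and> pathfinish (g x y) = pos y"
    and Gs: "\<And>x y. x \<in> K \<Longrightarrow> y \<in> K \<Longrightarrow> path_image (g x y) = path_image (g y x)"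
    and G2: "\<And>x y u v. x \<in> K \<Longrightarrow> y \<in> K \<Longrightarrow> u \<in> K \<Longrightarrow> v \<in> K \<Longrightarrow> x \<noteq> y \<Longrightarrow> u \<noteq> v \<Longrightarrow> {x,y} \<noteq> {u,v} \<Longrightarrow>
        path_image (g x y) \<inter> path_image (g u v) \<subseteq> pos ` ({x,y} \<inter> {u,v})"
    and inj: "inj_on pos K"
    and J: "J = path_image (g v1 v2) \<union> path_image (g v2 v3) \<union> path_image (g v3 v4) \<union> path_image (g v4 v5) \<union> path_image (g v5 v1)"
    and S: "S = inside J \<or> S = outside J"
    and c13: "path_image (g v1 v3) - {pos v1, pos v3} \<subseteq> S"
    and c24: "path_image (g v2 v4) - {pos v2, pos v4} \<subseteq> S"
  shows False
proof -
  define A where "A x y = path_image (g x y)" for x y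
  have inK: "v1 \<in> K" "v2 \<in> K" "v3 \<in> K" "v4 \<in> K" "v5 \<in> K" using K by auto
  have dd: "v1 \<noteq> v2" "v1 \<noteq> v3" "v1 \<noteq> v4" "v1 \<noteq> v5" "v2 \<noteq> v3" "v2 \<noteq> v4" "v2 \<noteq> v5"
     "v3 \<noteq> v4" "v3 \<noteq> v5" "v4 \<noteq> v5" using dist by auto
  have pd: "pos v1 \<noteq> pos v2" "pos v1 \<noteq> pos v3" "pos v1 \<noteq> pos v4" "pos v1 \<noteq> pos v5" "pos v2 \<noteq> pos v3" "pos v2 \<noteq> pos v4" "pos v2 \<noteq> pos v5"
     "pos v3 \<noteq> pos v4" "pos v3 \<noteq> pos v5" "pos v4 \<noteq> pos v5"
    using dd inj inK by (simp_all add: inj_on_eq_iff)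
  have g12: "arc (g v1 v2)" "pathstart (g v1 v2) = pos v1" "pathfinish (g v1 v2) = pos v2" using G1[OF inK(1) inK(2) dd(1)] by auto
  have g23: "arc (g v2 v3)" "pathstart (g v2 v3) = pos v2" "pathfinish (g v2 v3) = pos v3" using G1[OF inK(2) inK(3) dd(5)] by auto
  have g15: "arc (g v1 v5)" "pathstart (g v1 v5) = pos v1" "pathfinish (g v1 v5) = pos v5" using G1[OF inK(1) inK(5) dd(4)] by auto
  have g54: "arc (g v5 v4)" "pathstart (g v5 v4) = pos v5" "pathfinish (g v5 v4) = pos v4" using G1[OF inK(5) inK(4) dd(10)[symmetric]] by auto
  have g43: "arc (g v4 v3)" "pathstart (g v4 v3) = pos v4" "pathfinish (g v4 v3) = pos v3" using G1[OF inK(4) inK(3) dd(8)[symmetric]] by auto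
  have g13: "arc (g v1 v3)" "pathstart (g v1 v3) = pos v1" "pathfinish (g v1 v3) = pos v3" using G1[OF inK(1) inK(3) dd(2)] by auto
  have g24: "arc (g v2 v4)" "pathstart (g v2 v4) = pos v2" "pathfinish (g v2 v4) = pos v4" using G1[OF inK(2) inK(4) dd(6)] by auto
  have I: "\<And>x y u v. x \<in> K \<Longrightarrow> y \<in> K \<Longrightarrow> u \<in> K \<Longrightarrow> v \<in> K \<Longrightarrow> x \<noteq> y \<Longrightarrow> u \<noteq> v \<Longrightarrow> {x,y} \<noteq> {u,v} \<Longrightarrow>
        A x y \<inter> A u v \<subseteq> pos ` ({x,y} \<inter> {u,v})" unfolding A_def by (rule G2)
  have i12_23: "A v1 v2 \<inter> A v2 v3 \<subseteq> {pos v2}" using I[of v1 v2 v2 v3] inK dd by (auto simp: doubleton_eq_iff)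
  have i15_54: "A v1 v5 \<inter> A v5 v4 \<subseteq> {pos v5}" using I[of v1 v5 v5 v4] inK dd by (auto simp: doubleton_eq_iff)
  have i54_43: "A v5 v4 \<inter> A v4 v3 \<subseteq> {pos v4}" using I[of v5 v4 v4 v3] inK dd by (auto simp: doubleton_eq_iff)
  have i15_43: "A v1 v5 \<inter> A v4 v3 \<subseteq> {}" using I[of v1 v5 v4 v3] inK dd by (auto simp: doubleton_eq_iff)
  have i12_15: "A v1 v2 \<inter> A v1 v5 \<subseteq> {pos v1}" using I[of v1 v2 v1 v5] inK dd by (auto simp: doubleton_eq_iff)
  have i12_54: "A v1 v2 \<inter> A v5 v4 \<subseteq> {}" using I[of v1 v2 v5 v4] inK dd by (auto simp: doubleton_eq_iff)
  have i12_43: "A v1 v2 \<inter> A v4 v3 \<subseteq> {}" using I[of v1 v2 v4 v3] inK dd by (auto simp: doubleton_eq_iff)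
  have i23_15: "A v2 v3 \<inter> A v1 v5 \<subseteq> {}" using I[of v2 v3 v1 v5] inK dd by (auto simp: doubleton_eq_iff)
  have i23_54: "A v2 v3 \<inter> A v5 v4 \<subseteq> {}" using I[of v2 v3 v5 v4] inK dd by (auto simp: doubleton_eq_iff)
  have i23_43: "A v2 v3 \<inter> A v4 v3 \<subseteq> {pos v3}" using I[of v2 v3 v4 v3] inK dd by (auto simp: doubleton_eq_iff)
  have i13_12: "A v1 v3 \<inter> A v1 v2 \<subseteq> {pos v1}" using I[of v1 v3 v1 v2] inK dd by (auto simp: doubleton_eq_iff)
  have i13_23: "A v1 v3 \<inter> A v2 v3 \<subseteq> {pos v3}" using I[of v1 v3 v2 v3] inK dd by (auto simp: doubleton_eq_iff)
  have i13_15: "A v1 v3 \<inter> A v1 v5 \<subseteq> {pos v1}" using I[of v1 v3 v1 v5] inK dd by (auto simp: doubleton_eq_iff)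
  have i13_54: "A v1 v3 \<inter> A v5 v4 \<subseteq> {}" using I[of v1 v3 v5 v4] inK dd by (auto simp: doubleton_eq_iff)
  have i13_43: "A v1 v3 \<inter> A v4 v3 \<subseteq> {pos v3}" using I[of v1 v3 v4 v3] inK dd by (auto simp: doubleton_eq_iff)
  have i24_12: "A v2 v4 \<inter> A v1 v2 \<subseteq> {pos v2}" using I[of v2 v4 v1 v2] inK dd by (auto simp: doubleton_eq_iff)
  have i24_23: "A v2 v4 \<inter> A v2 v3 \<subseteq> {pos v2}" using I[of v2 v4 v2 v3] inK dd by (auto simp: doubleton_eq_iff)
  have i24_15: "A v2 v4 \<inter> A v1 v5 \<subseteq> {}" using I[of v2 v4 v1 v5] inK dd by (auto simp: doubleton_eq_iff)
  have i24_54: "A v2 v4 \<inter> A v5 v4 \<subseteq> {pos v4}" using I[of v2 v4 v5 v4] inK dd by (auto simp: doubleton_eq_iff)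
  have i24_43: "A v2 v4 \<inter> A v4 v3 \<subseteq> {pos v4}" using I[of v2 v4 v4 v3] inK dd by (auto simp: doubleton_eq_iff)
  have i24_13: "A v2 v4 \<inter> A v1 v3 \<subseteq> {}" using I[of v2 v4 v1 v3] inK dd by (auto simp: doubleton_eq_iff)
  define P1 where "P1 = g v1 v2 +++ g v2 v3"
  define P2 where "P2 = g v1 v5 +++ (g v5 v4 +++ g v4 v3)"
  have aP1: "arc P1" unfolding P1_def using g12 g23 i12_23 by (intro arc_join) (auto simp: A_def)
  have a543: "arc (g v5 v4 +++ g v4 v3)" using g54 g43 i54_43 by (intro arc_join) (auto simp: A_def)
  have aP2: "arc P2" unfolding P2_def using g15 a543 g54 g43 i15_54 i15_43
    by (rule_tac arc_join) (auto simp: A_def path_image_join)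
  have sP1: "pathstart P1 = pos v1" "pathfinish P1 = pos v3" unfolding P1_def using g12 g23 by auto
  have sP2: "pathstart P2 = pos v1" "pathfinish P2 = pos v3" unfolding P2_def using g15 g54 g43 by auto
  have imP1: "path_image P1 = A v1 v2 \<union> A v2 v3" unfolding P1_def A_def using g12 g23 by (simp add: path_image_join)
  have imP2: "path_image P2 = A v1 v5 \<union> A v5 v4 \<union> A v4 v3" unfolding P2_def A_def using g15 g54 g43
    by (simp add: path_image_join Un_assoc)
  have m1: "pos v1 \<in> A v1 v2" unfolding A_def using pathstart_in_path_image[of "g v1 v2"] g12(2) by simp
  have m2: "pos v1 \<in> A v1 v5" unfolding A_def using pathstart_in_path_image[of "g v1 v5"] g15(2) by simp
  have m3: "pos v1 \<in> A v1 v3" unfolding A_def using pathstart_in_path_image[of "g v1 v3"] g13(2) by simp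
  have m4: "pos v3 \<in> A v2 v3" unfolding A_def using pathfinish_in_path_image[of "g v2 v3"] g23(3) by simp
  have m5: "pos v3 \<in> A v4 v3" unfolding A_def using pathfinish_in_path_image[of "g v4 v3"] g43(3) by simp
  have m6: "pos v3 \<in> A v1 v3" unfolding A_def using pathfinish_in_path_image[of "g v1 v3"] g13(3) by simp
  have m7: "pos v2 \<in> A v1 v2" unfolding A_def using pathfinish_in_path_image[of "g v1 v2"] g12(3) by simp
  have m8: "pos v4 \<in> A v5 v4" unfolding A_def using pathfinish_in_path_image[of "g v5 v4"] g54(3) by simp
  note m = m1 m2 m3 m4 m5 m6 m7 m8
  have i12: "path_image P1 \<inter> path_image P2 = {pos v1, pos v3}"
    unfolding imP1 imP2 using i12_15 i12_54 i12_43 i23_15 i23_54 i23_43 m by blast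
  have i1c: "path_image P1 \<inter> path_image (g v1 v3) = {pos v1, pos v3}"
    unfolding imP1 A_def[symmetric] using i13_12 i13_23 m by blast
  have i2c: "path_image P2 \<inter> path_image (g v1 v3) = {pos v1, pos v3}"
    unfolding imP2 A_def[symmetric] using i13_15 i13_54 i13_43 m by blast
  have x1: "pos v2 \<in> path_image P1" "pos v2 \<notin> {pos v1, pos v3}" using imP1 m pd by auto
  have y2: "pos v4 \<in> path_image P2" "pos v4 \<notin> {pos v1, pos v3}" using imP2 m pd by auto
  have dJ: "path_image (g v2 v4) \<inter> (path_image P1 \<union> path_image P2) \<subseteq> {pos v2, pos v4}"
    unfolding imP1 imP2 A_def[symmetric] using i24_12 i24_23 i24_15 i24_54 i24_43 by blast
  have dc: "path_image (g v2 v4) \<inter> path_image (g v1 v3) = {}"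
    using i24_13 unfolding A_def by blast
  have JJ: "path_image P1 \<union> path_image P2 = J"
    unfolding imP1 imP2 J A_def using Gs[of v5 v4] Gs[of v4 v3] Gs[of v5 v1] inK by auto
  show False
    using S
  proof
    assume "S = inside J"
    then show False
      using cross_inside[OF aP1 aP2 g13(1) g24(1) sP1 sP2 g13(2,3) g24(2,3) i12 i1c i2c x1 y2 dJ dc]
        c13 c24 JJ pd by (auto simp: Int_commute)
  next
    assume "S = outside J"
    then show False
      using cross_outside[OF aP1 aP2 g13(1) g24(1) sP1 sP2 g13(2,3) g24(2,3) i12 i1c i2c x1 y2 dJ dc]
        c13 c24 JJ pd by (auto simp: Int_commute)
  qed
qed

lemma K5_sides:
  fixes g :: "'a \<Rightarrow> 'a \<Rightarrow> real \<Rightarrow> complex" and pos :: "'a \<Rightarrow> complex"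
  assumes dist: "distinct [v1,v2,v3,v4,v5]"
    and K: "K = {v1,v2,v3,v4,v5}"
    and G1: "\<And>x y. x \<in> K \<Longrightarrow> y \<in> K \<Longrightarrow> x \<noteq> y \<Longrightarrow> arc (g x y) \<and> pathstart (g x y) = pos x \<and> pathfinish (g x y) = pos y"
    and Gs: "\<And>x y. x \<in> K \<Longrightarrow> y \<in> K \<Longrightarrow> path_image (g x y) = path_image (g y x)"
    and G2: "\<And>x y u v. x \<in> K \<Longrightarrow> y \<in> K \<Longrightarrow> u \<in> K \<Longrightarrow> v \<in> K \<Longrightarrow> x \<noteq> y \<Longrightarrow> u \<noteq> v \<Longrightarrow> {x,y} \<noteq> {u,v} \<Longrightarrow>
        path_image (g x y) \<inter> path_image (g u v) \<subseteq> pos ` ({x,y} \<inter> {u,v})"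
    and inj: "inj_on pos K"
  shows False
proof -
  define A where "A x y = path_image (g x y)" for x y
  define J where "J = A v1 v2 \<union> A v2 v3 \<union> A v3 v4 \<union> A v4 v5 \<union> A v5 v1"
  define I where "I x y = A x y - {pos x, pos y}" for x y
  have inK: "v1 \<in> K" "v2 \<in> K" "v3 \<in> K" "v4 \<in> K" "v5 \<in> K" using K by auto
  have dd: "v1 \<noteq> v2" "v1 \<noteq> v3" "v1 \<noteq> v4" "v1 \<noteq> v5" "v2 \<noteq> v3" "v2 \<noteq> v4" "v2 \<noteq> v5"
     "v3 \<noteq> v4" "v3 \<noteq> v5" "v4 \<noteq> v5" using dist by auto
  have clA: "\<And>x y. x \<in> K \<Longrightarrow> y \<in> K \<Longrightarrow> x \<noteq> y \<Longrightarrow> closed (A x y)"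
    unfolding A_def using G1 closed_arc_image by blast
  have clJ: "closed J" unfolding J_def using clA inK dd
    by (intro closed_Un) (auto)
  have Gd: "\<And>x y u v. x \<in> K \<Longrightarrow> y \<in> K \<Longrightarrow> u \<in> K \<Longrightarrow> v \<in> K \<Longrightarrow> x \<noteq> y \<Longrightarrow> u \<noteq> v \<Longrightarrow> {x,y} \<noteq> {u,v} \<Longrightarrow>
        I x y \<inter> A u v = {}"
  proof -
    fix x y u v assume h: "x \<in> K" "y \<in> K" "u \<in> K" "v \<in> K" "x \<noteq> y" "u \<noteq> v" "{x,y} \<noteq> {u,v}"
    have "A x y \<inter> A u v \<subseteq> pos ` ({x,y} \<inter> {u,v})" unfolding A_def by (rule G2[OF h])
    also have "\<dots> \<subseteq> {pos x, pos y}" by auto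
    finally show "I x y \<inter> A u v = {}" unfolding I_def by blast
  qed
  have side: "\<And>x y. x \<in> K \<Longrightarrow> y \<in> K \<Longrightarrow> x \<noteq> y \<Longrightarrow> I x y \<inter> J = {} \<Longrightarrow>
      I x y \<subseteq> inside J \<or> I x y \<subseteq> outside J"
  proof -
    fix x y assume h: "x \<in> K" "y \<in> K" "x \<noteq> y" "I x y \<inter> J = {}"
    have c: "connected (I x y)" unfolding I_def A_def using arc_endless_props(1)[of "g x y"] G1[OF h(1-3)] by simp
    have "I x y \<subseteq> inside J \<union> outside J" using h(4) inside_Un_outside[of J] by blast
    then show "I x y \<subseteq> inside J \<or> I x y \<subseteq> outside J"
      using connected_split[OF c _ open_inside[OF clJ] open_outside[OF clJ]] inside_Int_outside by blast
  qed
  have d13_12: "I v1 v3 \<inter> A v1 v2 = {}" by (rule Gd) (use inK dd in \<open>auto simp: doubleton_eq_iff\<close>)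
  have d13_23: "I v1 v3 \<inter> A v2 v3 = {}" by (rule Gd) (use inK dd in \<open>auto simp: doubleton_eq_iff\<close>)
  have d13_34: "I v1 v3 \<inter> A v3 v4 = {}" by (rule Gd) (use inK dd in \<open>auto simp: doubleton_eq_iff\<close>)
  have d13_45: "I v1 v3 \<inter> A v4 v5 = {}" by (rule Gd) (use inK dd in \<open>auto simp: doubleton_eq_iff\<close>)
  have d13_51: "I v1 v3 \<inter> A v5 v1 = {}" by (rule Gd) (use inK dd in \<open>auto simp: doubleton_eq_iff\<close>)
  have j13: "I v1 v3 \<inter> J = {}" unfolding J_def using d13_12 d13_23 d13_34 d13_45 d13_51 by (simp add: Int_Un_distrib)
  have s13: "I v1 v3 \<subseteq> inside J \<or> I v1 v3 \<subseteq> outside J"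
    by (rule side[OF inK(1) inK(3) _ j13]) (use dd in auto)
  have d24_12: "I v2 v4 \<inter> A v1 v2 = {}" by (rule Gd) (use inK dd in \<open>auto simp: doubleton_eq_iff\<close>)
  have d24_23: "I v2 v4 \<inter> A v2 v3 = {}" by (rule Gd) (use inK dd in \<open>auto simp: doubleton_eq_iff\<close>)
  have d24_34: "I v2 v4 \<inter> A v3 v4 = {}" by (rule Gd) (use inK dd in \<open>auto simp: doubleton_eq_iff\<close>)
  have d24_45: "I v2 v4 \<inter> A v4 v5 = {}" by (rule Gd) (use inK dd in \<open>auto simp: doubleton_eq_iff\<close>)
  have d24_51: "I v2 v4 \<inter> A v5 v1 = {}" by (rule Gd) (use inK dd in \<open>auto simp: doubleton_eq_iff\<close>)
  have j24: "I v2 v4 \<inter> J = {}" unfolding J_def using d24_12 d24_23 d24_34 d24_45 d24_51 by (simp add: Int_Un_distrib)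
  have s24: "I v2 v4 \<subseteq> inside J \<or> I v2 v4 \<subseteq> outside J"
    by (rule side[OF inK(2) inK(4) _ j24]) (use dd in auto)
  have d35_12: "I v3 v5 \<inter> A v1 v2 = {}" by (rule Gd) (use inK dd in \<open>auto simp: doubleton_eq_iff\<close>)
  have d35_23: "I v3 v5 \<inter> A v2 v3 = {}" by (rule Gd) (use inK dd in \<open>auto simp: doubleton_eq_iff\<close>)
  have d35_34: "I v3 v5 \<inter> A v3 v4 = {}" by (rule Gd) (use inK dd in \<open>auto simp: doubleton_eq_iff\<close>)
  have d35_45: "I v3 v5 \<inter> A v4 v5 = {}" by (rule Gd) (use inK dd in \<open>auto simp: doubleton_eq_iff\<close>)
  have d35_51: "I v3 v5 \<inter> A v5 v1 = {}" by (rule Gd) (use inK dd in \<open>auto simp: doubleton_eq_iff\<close>)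
  have j35: "I v3 v5 \<inter> J = {}" unfolding J_def using d35_12 d35_23 d35_34 d35_45 d35_51 by (simp add: Int_Un_distrib)
  have s35: "I v3 v5 \<subseteq> inside J \<or> I v3 v5 \<subseteq> outside J"
    by (rule side[OF inK(3) inK(5) _ j35]) (use dd in auto)
  have d41_12: "I v4 v1 \<inter> A v1 v2 = {}" by (rule Gd) (use inK dd in \<open>auto simp: doubleton_eq_iff\<close>)
  have d41_23: "I v4 v1 \<inter> A v2 v3 = {}" by (rule Gd) (use inK dd in \<open>auto simp: doubleton_eq_iff\<close>)
  have d41_34: "I v4 v1 \<inter> A v3 v4 = {}" by (rule Gd) (use inK dd in \<open>auto simp: doubleton_eq_iff\<close>)
  have d41_45: "I v4 v1 \<inter> A v4 v5 = {}" by (rule Gd) (use inK dd in \<open>auto simp: doubleton_eq_iff\<close>)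
  have d41_51: "I v4 v1 \<inter> A v5 v1 = {}" by (rule Gd) (use inK dd in \<open>auto simp: doubleton_eq_iff\<close>)
  have j41: "I v4 v1 \<inter> J = {}" unfolding J_def using d41_12 d41_23 d41_34 d41_45 d41_51 by (simp add: Int_Un_distrib)
  have s41: "I v4 v1 \<subseteq> inside J \<or> I v4 v1 \<subseteq> outside J"
    by (rule side[OF inK(4) inK(1) _ j41]) (use dd in auto)
  have d52_12: "I v5 v2 \<inter> A v1 v2 = {}" by (rule Gd) (use inK dd in \<open>auto simp: doubleton_eq_iff\<close>)
  have d52_23: "I v5 v2 \<inter> A v2 v3 = {}" by (rule Gd) (use inK dd in \<open>auto simp: doubleton_eq_iff\<close>)
  have d52_34: "I v5 v2 \<inter> A v3 v4 = {}" by (rule Gd) (use inK dd in \<open>auto simp: doubleton_eq_iff\<close>)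
  have d52_45: "I v5 v2 \<inter> A v4 v5 = {}" by (rule Gd) (use inK dd in \<open>auto simp: doubleton_eq_iff\<close>)
  have d52_51: "I v5 v2 \<inter> A v5 v1 = {}" by (rule Gd) (use inK dd in \<open>auto simp: doubleton_eq_iff\<close>)
  have j52: "I v5 v2 \<inter> J = {}" unfolding J_def using d52_12 d52_23 d52_34 d52_45 d52_51 by blast
  have s52: "I v5 v2 \<subseteq> inside J \<or> I v5 v2 \<subseteq> outside J"
    by (rule side[OF inK(5) inK(2) _ j52]) (use dd in auto)
  have P: "\<And>w1 w2 w3 w4 w5 S. distinct [w1,w2,w3,w4,w5] \<Longrightarrow> K = {w1,w2,w3,w4,w5} \<Longrightarrow>
     J = A w1 w2 \<union> A w2 w3 \<union> A w3 w4 \<union> A w4 w5 \<union> A w5 w1 \<Longrightarrow> S = inside J \<or> S = outside J \<Longrightarrow>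
     I w1 w3 \<subseteq> S \<Longrightarrow> I w2 w4 \<subseteq> S \<Longrightarrow> False"
  proof -
    fix w1 w2 w3 w4 w5 S
    assume h1: "distinct [w1,w2,w3,w4,w5]" and h2: "K = {w1,w2,w3,w4,w5}"
      and h3: "J = A w1 w2 \<union> A w2 w3 \<union> A w3 w4 \<union> A w4 w5 \<union> A w5 w1"
      and h4: "S = inside J \<or> S = outside J" and h5: "I w1 w3 \<subseteq> S" and h6: "I w2 w4 \<subseteq> S"
    show False
      by (rule K5_pair[OF h1 h2 G1 Gs G2 inj h3[unfolded A_def] h4 h5[unfolded I_def A_def] h6[unfolded I_def A_def]])
  qed
  have dist1: "distinct [v1,v2,v3,v4,v5]" using dist by auto
  have K1: "K = {v1,v2,v3,v4,v5}" using K by auto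
  have r1: "J = A v1 v2 \<union> A v2 v3 \<union> A v3 v4 \<union> A v4 v5 \<union> A v5 v1" unfolding J_def by (simp add: Un_ac)
  note p1 = P[OF dist1 K1 r1]
  have dist2: "distinct [v2,v3,v4,v5,v1]" using dist by auto
  have K2: "K = {v2,v3,v4,v5,v1}" using K by auto
  have r2: "J = A v2 v3 \<union> A v3 v4 \<union> A v4 v5 \<union> A v5 v1 \<union> A v1 v2" unfolding J_def by (simp add: Un_ac)
  note p2 = P[OF dist2 K2 r2]
  have dist3: "distinct [v3,v4,v5,v1,v2]" using dist by auto
  have K3: "K = {v3,v4,v5,v1,v2}" using K by auto
  have r3: "J = A v3 v4 \<union> A v4 v5 \<union> A v5 v1 \<union> A v1 v2 \<union> A v2 v3" unfolding J_def by (simp add: Un_ac)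
  note p3 = P[OF dist3 K3 r3]
  have dist4: "distinct [v4,v5,v1,v2,v3]" using dist by auto
  have K4: "K = {v4,v5,v1,v2,v3}" using K by auto
  have r4: "J = A v4 v5 \<union> A v5 v1 \<union> A v1 v2 \<union> A v2 v3 \<union> A v3 v4" unfolding J_def by (simp add: Un_ac)
  note p4 = P[OF dist4 K4 r4]
  have dist5: "distinct [v5,v1,v2,v3,v4]" using dist by auto
  have K5: "K = {v5,v1,v2,v3,v4}" using K by auto
  have r5: "J = A v5 v1 \<union> A v1 v2 \<union> A v2 v3 \<union> A v3 v4 \<union> A v4 v5" unfolding J_def by (simp add: Un_ac)
  note p5 = P[OF dist5 K5 r5]
  show False
    using s13 s24 s35 s41 s52 p1[of "inside J"] p1[of "outside J"] p2[of "inside J"] p2[of "outside J"]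
      p3[of "inside J"] p3[of "outside J"] p4[of "inside J"] p4[of "outside J"] p5[of "inside J"] p5[of "outside J"]
    by blast
qed

lemma ce_img: "cycle_edges xs = (\<lambda>i. {xs!i, xs!((i+1) mod length xs)}) ` {..<length xs}"
  unfolding cycle_edges_def by auto
lemma ce5: "cycle_edges [a,b,c,d,e] = {{a,b},{b,c},{c,d},{d,e},{e,a}}"
  unfolding ce_img by (simp add: lessThan_Suc insert_commute)
lemma ce4: "cycle_edges [a,b,c,d] = {{a,b},{b,c},{c,d},{d,a}}"
  unfolding ce_img by (simp add: lessThan_Suc insert_commute)
lemma ce3: "cycle_edges [a,b,c] = {{a,b},{b,c},{c,a}}"
  unfolding ce_img by (simp add: lessThan_Suc insert_commute)
lemma sc_all: "simple_cycle E xs \<longleftrightarrow> length xs > 2 \<and> distinct xs \<and> (\<forall>i\<in>{..<length xs}. {xs ! i, xs ! ((i + 1) mod length xs)} \<in> E)"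
  unfolding simple_cycle_def by auto
lemma sc5: "simple_cycle E [a,b,c,d,e] \<longleftrightarrow> distinct [a,b,c,d,e] \<and> {a,b} \<in> E \<and> {b,c} \<in> E \<and> {c,d} \<in> E \<and> {d,e} \<in> E \<and> {e,a} \<in> E"
  unfolding sc_all by (simp add: lessThan_Suc) blast

context
  fixes E :: "'a set set"
  assumes F4: "\<And>a b c d. distinct [a,b,c,d] \<Longrightarrow> {a,b} \<in> E \<Longrightarrow> {b,c} \<in> E \<Longrightarrow> {c,d} \<in> E \<Longrightarrow> {d,a} \<in> E \<Longrightarrow> {a,c} \<in> E"
    and F6: "\<And>a b c d e f. distinct [a,b,c,d,e,f] \<Longrightarrow> {a,b} \<in> E \<Longrightarrow> {b,c} \<in> E \<Longrightarrow> {c,d} \<in> E \<Longrightarrow> {d,e} \<in> E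
        \<Longrightarrow> {e,f} \<in> E \<Longrightarrow> {f,a} \<in> E \<Longrightarrow> False"
    and F8: "\<And>a b c d e f g h. distinct [a,b,c,d,e,f,g,h] \<Longrightarrow> {a,b} \<in> E \<Longrightarrow> {b,c} \<in> E \<Longrightarrow> {c,d} \<in> E \<Longrightarrow> {d,e} \<in> E
        \<Longrightarrow> {e,f} \<in> E \<Longrightarrow> {f,g} \<in> E \<Longrightarrow> {g,h} \<in> E \<Longrightarrow> {h,a} \<in> E \<Longrightarrow> False"
    and NK5: "\<And>a b c d e. distinct [a,b,c,d,e] \<Longrightarrow> {a,b} \<in> E \<Longrightarrow> {a,c} \<in> E \<Longrightarrow> {a,d} \<in> E \<Longrightarrow> {a,e} \<in> E
        \<Longrightarrow> {b,c} \<in> E \<Longrightarrow> {b,d} \<in> E \<Longrightarrow> {b,e} \<in> E \<Longrightarrow> {c,d} \<in> E \<Longrightarrow> {c,e} \<in> E \<Longrightarrow> {d,e} \<in> E \<Longrightarrow> False"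
begin

lemma esym: "{a,b} \<in> E \<Longrightarrow> {b,a} \<in> E" by (simp add: insert_commute)

lemma chord5:
  assumes d: "distinct [a,b,c,d,e]" and e: "{a,b} \<in> E" "{b,c} \<in> E" "{c,d} \<in> E" "{d,e} \<in> E" "{e,a} \<in> E"
    and ch: "{a,c} \<in> E"
  shows False
proof -
  have ad: "{a,d} \<in> E" using F4[of a c d e] d e ch by auto
  have ce: "{c,e} \<in> E" using F4[of c d e a] d e ch esym[OF ch] by auto
  have bd: "{b,d} \<in> E" using F4[of b c d a] d e esym[OF ad] by auto
  have be: "{b,e} \<in> E" using F4[of b c e a] d e ce by auto
  show False using NK5[of a b c d e] d e ch ad ce bd be esym[OF e(5)] by auto
qed

lemma core3:
  assumes d1: "distinct [u,v,p,q,r]" and e1: "{u,v} \<in> E" "{v,p} \<in> E" "{p,q} \<in> E" "{q,r} \<in> E" "{r,u} \<in> E"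
    and d2: "distinct [u,v,w]" and e2: "{v,w} \<in> E" "{w,u} \<in> E"
  shows False
proof -
  have nup: "{u,p} \<notin> E" using chord5[of u v p q r] d1 e1 by blast
  have nvq: "{v,q} \<notin> E" using chord5[of v p q r u] d1 e1 by auto
  have nrv: "{r,v} \<notin> E" using chord5[of r u v p q] d1 e1 by auto
  have nqu: "{q,u} \<notin> E" using chord5[of q r u v p] d1 e1 by auto
  consider "w = p" | "w = q" | "w = r" | "w \<notin> {u,v,p,q,r}" using d2 by auto
  then show False
  proof cases
    case 1 then show ?thesis using nup e2 by (simp add: insert_commute)
  next
    case 2 then show ?thesis using nvq e2 by (simp add: insert_commute)
  next
    case 3 then show ?thesis using nrv e2 by (simp add: insert_commute)
  next
    case 4 then show ?thesis using F6[of u w v p q r] d1 e1 e2 by (auto simp: insert_commute)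
  qed
qed

lemma core4:
  assumes d1: "distinct [u,v,p,q,r]" and e1: "{u,v} \<in> E" "{v,p} \<in> E" "{p,q} \<in> E" "{q,r} \<in> E" "{r,u} \<in> E"
    and d2: "distinct [u,v,w,z]" and e2: "{v,w} \<in> E" "{w,z} \<in> E" "{z,u} \<in> E"
  shows False
proof -
  have "{u,w} \<in> E" using F4[of u v w z] d2 e1 e2 by auto
  then show False using core3[OF d1 e1, of w] d2 e2 by (auto simp: insert_commute)
qed

lemma core5:
  assumes d1: "distinct [u,v,p,q,r]" and e1: "{u,v} \<in> E" "{v,p} \<in> E" "{p,q} \<in> E" "{q,r} \<in> E" "{r,u} \<in> E"
    and d2: "distinct [u,v,w,x,y]" and e2: "{v,w} \<in> E" "{w,x} \<in> E" "{x,y} \<in> E" "{y,u} \<in> E"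
  shows "w = p \<and> x = q \<and> y = r"
proof -
  have nup: "{u,p} \<notin> E" using chord5[of u v p q r] d1 e1 by blast
  have nvq: "{v,q} \<notin> E" using chord5[of v p q r u] d1 e1 by auto
  have npr: "{p,r} \<notin> E" using chord5[of p q r u v] d1 e1 by auto
  have nqu: "{q,u} \<notin> E" using chord5[of q r u v p] d1 e1 by auto
  have nrv: "{r,v} \<notin> E" using chord5[of r u v p q] d1 e1 by auto
  have wC: "w = p \<or> w \<notin> {u,v,p,q,r}"
  proof -
    have "w \<noteq> q" using nvq e2 by auto
    moreover have "w \<noteq> r" using nrv e2 by (auto simp: insert_commute)
    ultimately show ?thesis using d2 by auto
  qed
  have yC: "y = r \<or> y \<notin> {u,v,p,q,r}"
  proof -
    have "y \<noteq> p" using nup e2 by (auto simp: insert_commute)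
    moreover have "y \<noteq> q" using nqu e2 by auto
    ultimately show ?thesis using d2 by auto
  qed
  show ?thesis
  proof (cases "w = p")
    case wp: True
    show ?thesis
    proof (cases "y = r")
      case yr: True
      have "x = q"
      proof (rule ccontr)
        assume "x \<noteq> q"
        then have "distinct [p,q,r,x]" using d1 d2 wp yr by auto
        then have "{p,r} \<in> E" using F4[of p q r x] e1 e2 wp yr by (auto simp: insert_commute)
        then show False using npr by simp
      qed
      then show ?thesis using wp yr by simp
    next
      case yn: False
      then have yo: "y \<notin> {u,v,p,q,r}" using yC by simp
      consider "x = q" | "x = r" | "x \<notin> {u,v,p,q,r}" using d2 wp by auto
      then show ?thesis
      proof cases
        case 1
        have "distinct [u,y,q,r]" using d1 yo by auto
        then have "{u,q} \<in> E" using F4[of u y q r] e1 e2 1 by (auto simp: insert_commute)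
        then show ?thesis using nqu by (simp add: insert_commute)
      next
        case 2 then show ?thesis using npr e2 wp by simp
      next
        case 3
        have "distinct [u,r,q,p,x,y]" using d1 d2 yo 3 by auto
        then show ?thesis using F6[of u r q p x y] e1 e2 wp by (auto simp: insert_commute)
      qed
    qed
  next
    case wn: False
    then have wo: "w \<notin> {u,v,p,q,r}" using wC by simp
    show ?thesis
    proof (cases "y = r")
      case yr: True
      consider "x = p" | "x = q" | "x \<notin> {u,v,p,q,r}" using d2 yr by auto
      then show ?thesis
      proof cases
        case 1 then show ?thesis using npr e2 yr by simp
      next
        case 2
        have "distinct [v,w,q,p]" using d1 wo by auto
        then have "{v,q} \<in> E" using F4[of v w q p] e1 e2 2 by (auto simp: insert_commute)
        then show ?thesis using nvq by simp
      next
        case 3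
        have "distinct [v,w,x,r,q,p]" using d1 d2 wo 3 by auto
        then show ?thesis using F6[of v w x r q p] e1 e2 yr by (auto simp: insert_commute)
      qed
    next
      case yn: False
      then have yo: "y \<notin> {u,v,p,q,r}" using yC by simp
      consider "x = p" | "x = q" | "x = r" | "x \<notin> {u,v,p,q,r}" using d2 by auto
      then show ?thesis
      proof cases
        case 1
        have "distinct [v,w,p,q,r,u]" using d1 wo by auto
        then show ?thesis using F6[of v w p q r u] e1 e2 1 by (auto simp: insert_commute)
      next
        case 2
        have "distinct [v,w,q,p]" using d1 wo by auto
        then have "{v,q} \<in> E" using F4[of v w q p] e1 e2 2 by (auto simp: insert_commute)
        then show ?thesis using nvq by simp
      next
        case 3
        have "distinct [u,y,r,q,p,v]" using d1 yo by auto
        then show ?thesis using F6[of u y r q p v] e1 e2 3 by (auto simp: insert_commute)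
      next
        case 4
        have "distinct [u,y,x,w,v,p,q,r]" using d1 d2 wo yo 4 by auto
        then show ?thesis using F8[of u y x w v p q r] e1 e2 by (auto simp: insert_commute)
      qed
    qed
  qed
qed

end

lemma sc_sub: "simple_cycle E xs \<longleftrightarrow> length xs > 2 \<and> distinct xs \<and> cycle_edges xs \<subseteq> E"
  unfolding simple_cycle_def cycle_edges_def by auto

lemma ce_rotate1: "cycle_edges (rotate1 xs) = cycle_edges xs"
proof (cases "xs = []")
  case True then show ?thesis by simp
next
  case False
  let ?L = "length xs"
  define f where "f i = {xs!i, xs!((i+1) mod ?L)}" for i
  have L: "?L > 0" using False by simp
  have "cycle_edges (rotate1 xs) = (\<lambda>i. f ((i+1) mod ?L)) ` {..<?L}"
  proof -
    have r: "\<And>i. i < ?L \<Longrightarrow> rotate1 xs ! i = xs ! (Suc i mod ?L)" by (rule nth_rotate1)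
    have m: "\<And>i. Suc i mod ?L < ?L" using L by simp
    show ?thesis unfolding ce_img f_def length_rotate1
    proof (intro image_cong refl)
      fix i assume "i \<in> {..<?L}"
      then have i: "i < ?L" by simp
      show "{rotate1 xs ! i, rotate1 xs ! ((i + 1) mod ?L)} =
            {xs ! ((i + 1) mod ?L), xs ! (((i + 1) mod ?L + 1) mod ?L)}"
        using r[OF i] r[OF m[of i]] by simp
    qed
  qed
  also have "\<dots> = f ` ((\<lambda>i. (i+1) mod ?L) ` {..<?L})" by (simp add: image_image)
  also have "(\<lambda>i. (i+1) mod ?L) ` {..<?L} = {..<?L}"
  proof
    show "(\<lambda>i. (i+1) mod ?L) ` {..<?L} \<subseteq> {..<?L}" using L by auto
    show "{..<?L} \<subseteq> (\<lambda>i. (i+1) mod ?L) ` {..<?L}"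
    proof
      fix k assume k: "k \<in> {..<?L}"
      show "k \<in> (\<lambda>i. (i+1) mod ?L) ` {..<?L}"
      proof (cases "k = 0")
        case True
        then have "k = ((?L - 1) + 1) mod ?L" using L by simp
        then show ?thesis using L by (intro image_eqI[where x="?L - 1"]) auto
      next
        case False
        then have "k = ((k - 1) + 1) mod ?L" using k by simp
        then show ?thesis using k by (intro image_eqI[where x="k - 1"]) auto
      qed
    qed
  qed
  finally show ?thesis unfolding ce_img f_def by simp
qed

lemma ce_rotate: "cycle_edges (rotate n xs) = cycle_edges xs"
  by (induction n) (simp_all add: ce_rotate1)

lemma sc_rotate: "simple_cycle E (rotate n xs) \<longleftrightarrow> simple_cycle E xs"
  by (simp add: sc_sub ce_rotate)

lemma normalize:
  assumes sc: "simple_cycle E C" and e: "e \<in> cycle_edges C"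
  obtains C' where "simple_cycle E C'" "cycle_edges C' = cycle_edges C" "length C' = length C" "e = {C'!0, C'!1}"
proof -
  obtain i where i: "i < length C" "e = {C!i, C!((i+1) mod length C)}" using e unfolding cycle_edges_def by auto
  have L: "length C > 2" using sc unfolding simple_cycle_def by simp
  let ?C = "rotate i C"
  have "C \<noteq> []" using L by auto
  then have "?C ! 0 = C ! i" using nth_rotate[of 0 C i] L i by simp
  moreover have "?C ! 1 = C ! ((i+1) mod length C)" using L by (simp add: nth_rotate)
  ultimately show ?thesis using that[of ?C] sc i by (simp add: sc_rotate ce_rotate)
qed

lemma list3: "length xs = 3 \<Longrightarrow> \<exists>a b c. xs = [a,b,c]"
  by (auto simp: numeral_eq_Suc length_Suc_conv)
lemma list4: "length xs = 4 \<Longrightarrow> \<exists>a b c d. xs = [a,b,c,d]"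
  by (auto simp: numeral_eq_Suc length_Suc_conv)
lemma list5: "length xs = 5 \<Longrightarrow> \<exists>a b c d e. xs = [a,b,c,d,e]"
  by (auto simp: numeral_eq_Suc length_Suc_conv)

lemma sc3: "simple_cycle E [a,b,c] \<longleftrightarrow> distinct [a,b,c] \<and> {a,b} \<in> E \<and> {b,c} \<in> E \<and> {c,a} \<in> E"
  unfolding sc_all by (simp add: lessThan_Suc) blast
lemma sc4: "simple_cycle E [a,b,c,d] \<longleftrightarrow> distinct [a,b,c,d] \<and> {a,b} \<in> E \<and> {b,c} \<in> E \<and> {c,d} \<in> E \<and> {d,a} \<in> E"
  unfolding sc_all by (simp add: lessThan_Suc) blast
lemma sc6: "simple_cycle E [a,b,c,d,e,f] \<longleftrightarrow> distinct [a,b,c,d,e,f] \<and> {a,b} \<in> E \<and> {b,c} \<in> E \<and> {c,d} \<in> E \<and> {d,e} \<in> E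
    \<and> {e,f} \<in> E \<and> {f,a} \<in> E"
  unfolding sc_all by (simp add: lessThan_Suc) blast
lemma sc8: "simple_cycle E [a,b,c,d,e,f,g,h] \<longleftrightarrow> distinct [a,b,c,d,e,f,g,h] \<and> {a,b} \<in> E \<and> {b,c} \<in> E \<and> {c,d} \<in> E \<and> {d,e} \<in> E
    \<and> {e,f} \<in> E \<and> {f,g} \<in> E \<and> {g,h} \<in> E \<and> {h,a} \<in> E"
  unfolding sc_all by (simp add: lessThan_Suc) blast

lemma even_cycle_complete:
  assumes H: "\<forall>C. simple_cycle E C \<and> length C \<le> 10 \<longrightarrow> \<not> removable E C"
    and sc: "simple_cycle E C" and l: "length C \<le> 10" and ev: "even (length C)"
    and u: "u \<in> set C" and v: "v \<in> set C" and uv: "u \<noteq> v"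
  shows "{u,v} \<in> E"
proof -
  have dC: "distinct C" using sc unfolding simple_cycle_def by simp
  have nr: "\<not> removable E C" using H sc l by blast
  then have "is_complete_graph (set C) (induced_edges E (set C)) \<or> is_odd_cycle_graph (set C) (induced_edges E (set C))"
    using sc unfolding removable_def by blast
  then show ?thesis
  proof
    assume "is_odd_cycle_graph (set C) (induced_edges E (set C))"
    then obtain n :: nat and f where n: "odd n" and b: "bij_betw f (set C) {0..<n}"
      unfolding is_odd_cycle_graph_def graph_iso_def by blast
    have "card (set C) = n" using bij_betw_same_card[OF b] by simp
    then have "length C = n" using distinct_card[OF dC] by simp
    then show ?thesis using n ev by simp
  next
    assume "is_complete_graph (set C) (induced_edges E (set C))"
    then obtain n :: nat and f where b: "bij_betw f (set C) {0..<n}"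
      and iso: "\<forall>x\<in>set C. \<forall>y\<in>set C. {x,y} \<in> induced_edges E (set C) \<longleftrightarrow> {f x, f y} \<in> complete_graph_edges n"
      unfolding is_complete_graph_def graph_iso_def by blast
    have "f u \<noteq> f v" using b u v uv unfolding bij_betw_def by (meson inj_on_eq_iff)
    moreover have "f u < n" "f v < n" using b u v unfolding bij_betw_def by auto
    ultimately have "{f u, f v} \<in> complete_graph_edges n" unfolding complete_graph_edges_def by blast
    then have "{u,v} \<in> induced_edges E (set C)" using iso u v by blast
    then show ?thesis unfolding induced_edges_def by blast
  qed
qed

lemma K5_nonplanar:
  assumes pl: "planar V E" and sg: "simple_graph V E" and dist: "distinct [v1,v2,v3,v4,v5]"
    and adj: "\<And>x y. x \<in> {v1,v2,v3,v4,v5} \<Longrightarrow> y \<in> {v1,v2,v3,v4,v5} \<Longrightarrow> x \<noteq> y \<Longrightarrow> {x,y} \<in> E"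
  shows False
proof -
  obtain pos :: "'a \<Rightarrow> complex" and \<gamma> :: "'a set \<Rightarrow> real \<Rightarrow> complex" where inj: "inj_on pos V"
    and ar: "\<forall>e\<in>E. arc (\<gamma> e) \<and> {pathstart (\<gamma> e), pathfinish (\<gamma> e)} = pos ` e"
    and dj: "\<forall>e\<in>E. \<forall>e'\<in>E. e \<noteq> e' \<longrightarrow> path_image (\<gamma> e) \<inter> path_image (\<gamma> e') \<subseteq> pos ` (e \<inter> e')"
    and nv: "\<forall>e\<in>E. \<forall>v\<in>V. v \<notin> e \<longrightarrow> pos v \<notin> path_image (\<gamma> e)"
    using pl unfolding planar_def by (elim exE conjE) blast
  define K where "K = {v1,v2,v3,v4,v5}"
  have KV: "K \<subseteq> V"
  proof
    fix x assume x: "x \<in> K"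
    define y where "y = (if x = v1 then v2 else v1)"
    have "y \<in> K" "y \<noteq> x" using dist x unfolding K_def y_def by auto
    then have "{x,y} \<in> E" using adj x unfolding K_def by auto
    then obtain a b where "{x,y} = {a,b}" "a \<in> V" "b \<in> V" using sg unfolding simple_graph_def by blast
    then show "x \<in> V" by (auto simp: doubleton_eq_iff)
  qed
  define g where "g x y = (if pathstart (\<gamma> {x,y}) = pos x then \<gamma> {x,y} else reversepath (\<gamma> {x,y}))" for x y
  have G1: "\<And>x y. x \<in> K \<Longrightarrow> y \<in> K \<Longrightarrow> x \<noteq> y \<Longrightarrow> arc (g x y) \<and> pathstart (g x y) = pos x \<and> pathfinish (g x y) = pos y"
  proof -
    fix x y assume h: "x \<in> K" "y \<in> K" "x \<noteq> y"
    have e: "{x,y} \<in> E" using adj h unfolding K_def by auto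
    have a: "arc (\<gamma> {x,y})" and se: "{pathstart (\<gamma> {x,y}), pathfinish (\<gamma> {x,y})} = {pos x, pos y}" using ar e by auto
    have pxy: "pos x \<noteq> pos y" using inj KV h by (meson inj_on_eq_iff subsetD)
    show "arc (g x y) \<and> pathstart (g x y) = pos x \<and> pathfinish (g x y) = pos y"
    proof (cases "pathstart (\<gamma> {x,y}) = pos x")
      case True
      then have "pathfinish (\<gamma> {x,y}) = pos y" using se pxy by (auto simp: doubleton_eq_iff)
      with True a show ?thesis by (simp add: g_def)
    next
      case False
      then have "pathstart (\<gamma> {x,y}) = pos y" "pathfinish (\<gamma> {x,y}) = pos x" using se by (auto simp: doubleton_eq_iff)
      with False a show ?thesis by (simp add: g_def arc_reversepath)
    qed
  qed
  have pim: "\<And>x y. path_image (g x y) = path_image (\<gamma> {x,y})" by (simp add: g_def path_image_reversepath)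
  have Gs: "\<And>x y. x \<in> K \<Longrightarrow> y \<in> K \<Longrightarrow> path_image (g x y) = path_image (g y x)"
    unfolding pim by (metis insert_commute)
  have G2: "\<And>x y u v. x \<in> K \<Longrightarrow> y \<in> K \<Longrightarrow> u \<in> K \<Longrightarrow> v \<in> K \<Longrightarrow> x \<noteq> y \<Longrightarrow> u \<noteq> v \<Longrightarrow> {x,y} \<noteq> {u,v} \<Longrightarrow>
        path_image (g x y) \<inter> path_image (g u v) \<subseteq> pos ` ({x,y} \<inter> {u,v})"
  proof -
    fix x y u v assume h: "x \<in> K" "y \<in> K" "u \<in> K" "v \<in> K" "x \<noteq> y" "u \<noteq> v" "{x,y} \<noteq> {u,v}"
    have "{x,y} \<in> E" "{u,v} \<in> E" using adj h unfolding K_def by auto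
    then show "path_image (g x y) \<inter> path_image (g u v) \<subseteq> pos ` ({x,y} \<inter> {u,v})"
      unfolding pim using dj h(7) by auto
  qed
  have injK: "inj_on pos K" using inj KV by (rule inj_on_subset)
  show False by (rule K5_sides[OF dist K_def G1 Gs G2 injK])
qed

lemma main_aux:
  fixes V :: "'a set" and E :: "'a set set" and C1 C2 :: "'a list"
  assumes sg: "simple_graph V E" and pl: "planar V E"
    and H: "\<forall>C. simple_cycle E C \<and> length C \<le> 10 \<longrightarrow> \<not> removable E C"
    and sc1: "simple_cycle E C1" and sc2: "simple_cycle E C2"
    and neq: "cycle_edges C1 \<noteq> cycle_edges C2"
    and l1: "length C1 = 5" and l2: "length C2 \<le> 5"
  shows "cycle_edges C1 \<inter> cycle_edges C2 = {}"
proof (rule ccontr)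
  assume "cycle_edges C1 \<inter> cycle_edges C2 \<noteq> {}"
  then obtain e where e1: "e \<in> cycle_edges C1" and e2: "e \<in> cycle_edges C2" by blast
  have NK5: "\<And>a b c d e. distinct [a,b,c,d,e] \<Longrightarrow> {a,b} \<in> E \<Longrightarrow> {a,c} \<in> E \<Longrightarrow> {a,d} \<in> E \<Longrightarrow> {a,e} \<in> E
        \<Longrightarrow> {b,c} \<in> E \<Longrightarrow> {b,d} \<in> E \<Longrightarrow> {b,e} \<in> E \<Longrightarrow> {c,d} \<in> E \<Longrightarrow> {c,e} \<in> E \<Longrightarrow> {d,e} \<in> E \<Longrightarrow> False"
  proof -
    fix a b c d e
    assume h: "distinct [a,b,c,d,e]" "{a,b} \<in> E" "{a,c} \<in> E" "{a,d} \<in> E" "{a,e} \<in> E"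
        "{b,c} \<in> E" "{b,d} \<in> E" "{b,e} \<in> E" "{c,d} \<in> E" "{c,e} \<in> E" "{d,e} \<in> E"
    show False
    proof (rule K5_nonplanar[OF pl sg h(1)])
      fix x y assume "x \<in> {a,b,c,d,e}" "y \<in> {a,b,c,d,e}" "x \<noteq> y"
      then show "{x,y} \<in> E" using h(2-11) by (auto simp: insert_commute)
    qed
  qed
  have F4: "\<And>a b c d. distinct [a,b,c,d] \<Longrightarrow> {a,b} \<in> E \<Longrightarrow> {b,c} \<in> E \<Longrightarrow> {c,d} \<in> E \<Longrightarrow> {d,a} \<in> E \<Longrightarrow> {a,c} \<in> E"
  proof -
    fix a b c d assume h: "distinct [a,b,c,d]" "{a,b} \<in> E" "{b,c} \<in> E" "{c,d} \<in> E" "{d,a} \<in> E"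
    have sc: "simple_cycle E [a,b,c,d]" using h by (simp add: sc4)
    show "{a,c} \<in> E" by (rule even_cycle_complete[OF H sc]) (use h(1) in auto)
  qed
  have F6: "\<And>a b c d e f. distinct [a,b,c,d,e,f] \<Longrightarrow> {a,b} \<in> E \<Longrightarrow> {b,c} \<in> E \<Longrightarrow> {c,d} \<in> E \<Longrightarrow> {d,e} \<in> E
        \<Longrightarrow> {e,f} \<in> E \<Longrightarrow> {f,a} \<in> E \<Longrightarrow> False"
  proof -
    fix a b c d e f assume h: "distinct [a,b,c,d,e,f]" "{a,b} \<in> E" "{b,c} \<in> E" "{c,d} \<in> E" "{d,e} \<in> E"
        "{e,f} \<in> E" "{f,a} \<in> E"
    have sc: "simple_cycle E [a,b,c,d,e,f]" using h by (simp add: sc6)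
    have all: "\<And>x y. x \<in> set [a,b,c,d,e,f] \<Longrightarrow> y \<in> set [a,b,c,d,e,f] \<Longrightarrow> x \<noteq> y \<Longrightarrow> {x,y} \<in> E"
      by (rule even_cycle_complete[OF H sc]) auto
    have d5: "distinct [a,b,c,d,e]" using h(1) by simp
    show False by (rule NK5[OF d5]) (use h(1) in \<open>auto intro!: all\<close>)
  qed
  have F8: "\<And>a b c d e f g h. distinct [a,b,c,d,e,f,g,h] \<Longrightarrow> {a,b} \<in> E \<Longrightarrow> {b,c} \<in> E \<Longrightarrow> {c,d} \<in> E \<Longrightarrow> {d,e} \<in> E
        \<Longrightarrow> {e,f} \<in> E \<Longrightarrow> {f,g} \<in> E \<Longrightarrow> {g,h} \<in> E \<Longrightarrow> {h,a} \<in> E \<Longrightarrow> False"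
  proof -
    fix a b c d e f g h assume hh: "distinct [a,b,c,d,e,f,g,h]" "{a,b} \<in> E" "{b,c} \<in> E" "{c,d} \<in> E" "{d,e} \<in> E"
        "{e,f} \<in> E" "{f,g} \<in> E" "{g,h} \<in> E" "{h,a} \<in> E"
    have sc: "simple_cycle E [a,b,c,d,e,f,g,h]" using hh by (simp add: sc8)
    have all: "\<And>x y. x \<in> set [a,b,c,d,e,f,g,h] \<Longrightarrow> y \<in> set [a,b,c,d,e,f,g,h] \<Longrightarrow> x \<noteq> y \<Longrightarrow> {x,y} \<in> E"
      by (rule even_cycle_complete[OF H sc]) auto
    have d5: "distinct [a,b,c,d,e]" using hh(1) by simp
    show False by (rule NK5[OF d5]) (use hh(1) in \<open>auto intro!: all\<close>)
  qed
  have c3: "\<And>u v p q r w. distinct [u,v,p,q,r] \<Longrightarrow> {u,v} \<in> E \<Longrightarrow> {v,p} \<in> E \<Longrightarrow> {p,q} \<in> E \<Longrightarrow> {q,r} \<in> E \<Longrightarrow> {r,u} \<in> E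
     \<Longrightarrow> distinct [u,v,w] \<Longrightarrow> {v,w} \<in> E \<Longrightarrow> {w,u} \<in> E \<Longrightarrow> False"
  proof -
    fix u v p q r w
    assume h: "distinct [u,v,p,q,r]" "{u,v} \<in> E" "{v,p} \<in> E" "{p,q} \<in> E" "{q,r} \<in> E" "{r,u} \<in> E" "distinct [u,v,w]" "{v,w} \<in> E" "{w,u} \<in> E"
    show "False" by (rule core3[of E u v p q r w]) (fact F4 F6 F8 NK5 h)+
  qed
  have c4: "\<And>u v p q r w z. distinct [u,v,p,q,r] \<Longrightarrow> {u,v} \<in> E \<Longrightarrow> {v,p} \<in> E \<Longrightarrow> {p,q} \<in> E \<Longrightarrow> {q,r} \<in> E \<Longrightarrow> {r,u} \<in> E
     \<Longrightarrow> distinct [u,v,w,z] \<Longrightarrow> {v,w} \<in> E \<Longrightarrow> {w,z} \<in> E \<Longrightarrow> {z,u} \<in> E \<Longrightarrow> False"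
  proof -
    fix u v p q r w z
    assume h: "distinct [u,v,p,q,r]" "{u,v} \<in> E" "{v,p} \<in> E" "{p,q} \<in> E" "{q,r} \<in> E" "{r,u} \<in> E" "distinct [u,v,w,z]" "{v,w} \<in> E" "{w,z} \<in> E" "{z,u} \<in> E"
    show "False" by (rule core4[of E u v p q r w z]) (fact F4 F6 F8 NK5 h)+
  qed
  have c5: "\<And>u v p q r w x y. distinct [u,v,p,q,r] \<Longrightarrow> {u,v} \<in> E \<Longrightarrow> {v,p} \<in> E \<Longrightarrow> {p,q} \<in> E \<Longrightarrow> {q,r} \<in> E \<Longrightarrow> {r,u} \<in> E
     \<Longrightarrow> distinct [u,v,w,x,y] \<Longrightarrow> {v,w} \<in> E \<Longrightarrow> {w,x} \<in> E \<Longrightarrow> {x,y} \<in> E \<Longrightarrow> {y,u} \<in> E \<Longrightarrow> w = p \<and> x = q \<and> y = r"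
  proof -
    fix u v p q r w x y
    assume h: "distinct [u,v,p,q,r]" "{u,v} \<in> E" "{v,p} \<in> E" "{p,q} \<in> E" "{q,r} \<in> E" "{r,u} \<in> E" "distinct [u,v,w,x,y]" "{v,w} \<in> E" "{w,x} \<in> E" "{x,y} \<in> E" "{y,u} \<in> E"
    show "w = p \<and> x = q \<and> y = r" by (rule core5[of E u v p q r w x y]) (fact F4 F6 F8 NK5 h)+
  qed
  obtain D1 where D1: "simple_cycle E D1" "cycle_edges D1 = cycle_edges C1" "length D1 = length C1" "e = {D1!0, D1!1}"
    using normalize[OF sc1 e1] by blast
  obtain D2 where D2: "simple_cycle E D2" "cycle_edges D2 = cycle_edges C2" "length D2 = length C2" "e = {D2!0, D2!1}"
    using normalize[OF sc2 e2] by blast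
  have "length D1 = 5" using D1(3) l1 by simp
  then obtain a0 a1 a2 a3 a4 where A: "D1 = [a0,a1,a2,a3,a4]" using list5 by blast
  have d1: "distinct [a0,a1,a2,a3,a4]" and E1: "{a0,a1} \<in> E" "{a1,a2} \<in> E" "{a2,a3} \<in> E" "{a3,a4} \<in> E" "{a4,a0} \<in> E"
    using D1(1) unfolding A sc5 by auto
  have d1': "distinct [a1,a0,a4,a3,a2]" using d1 by auto
  have E1': "{a1,a0} \<in> E" "{a0,a4} \<in> E" "{a4,a3} \<in> E" "{a3,a2} \<in> E" "{a2,a1} \<in> E"
    using E1 by (simp_all add: insert_commute)
  have neq': "cycle_edges D1 \<noteq> cycle_edges D2" using neq D1(2) D2(2) by simp
  have eD1: "e = {a0,a1}" using D1(4) A by simp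
  have l2': "length D2 > 2" using D2(1) unfolding simple_cycle_def by simp
  consider "length D2 = 3" | "length D2 = 4" | "length D2 = 5" using l2' l2 D2(3) by linarith
  then show False
  proof cases
    case 1
    then obtain b0 b1 b2 where B: "D2 = [b0,b1,b2]" using list3 by blast
    have d2: "distinct [b0,b1,b2]" and E2: "{b0,b1} \<in> E" "{b1,b2} \<in> E" "{b2,b0} \<in> E"
      using D2(1) unfolding B sc3 by auto
    have "{a0,a1} = {b0,b1}" using D2(4) eD1 B by simp
    then have "(b0 = a0 \<and> b1 = a1) \<or> (b0 = a1 \<and> b1 = a0)" by (auto simp: doubleton_eq_iff)
    then show False
    proof
      assume o: "b0 = a0 \<and> b1 = a1"
      show False by (rule c3[OF d1 E1, of b2]) (use d2 E2 o in auto)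
    next
      assume o: "b0 = a1 \<and> b1 = a0"
      show False by (rule c3[OF d1' E1', of b2]) (use d2 E2 o in auto)
    qed
  next
    case 2
    then obtain b0 b1 b2 b3 where B: "D2 = [b0,b1,b2,b3]" using list4 by blast
    have d2: "distinct [b0,b1,b2,b3]" and E2: "{b0,b1} \<in> E" "{b1,b2} \<in> E" "{b2,b3} \<in> E" "{b3,b0} \<in> E"
      using D2(1) unfolding B sc4 by auto
    have "{a0,a1} = {b0,b1}" using D2(4) eD1 B by simp
    then have "(b0 = a0 \<and> b1 = a1) \<or> (b0 = a1 \<and> b1 = a0)" by (auto simp: doubleton_eq_iff)
    then show False
    proof
      assume o: "b0 = a0 \<and> b1 = a1"
      show False by (rule c4[OF d1 E1, of b2 b3]) (use d2 E2 o in auto)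
    next
      assume o: "b0 = a1 \<and> b1 = a0"
      show False by (rule c4[OF d1' E1', of b2 b3]) (use d2 E2 o in auto)
    qed
  next
    case 3
    then obtain b0 b1 b2 b3 b4 where B: "D2 = [b0,b1,b2,b3,b4]" using list5 by blast
    have d2: "distinct [b0,b1,b2,b3,b4]" and E2: "{b0,b1} \<in> E" "{b1,b2} \<in> E" "{b2,b3} \<in> E" "{b3,b4} \<in> E" "{b4,b0} \<in> E"
      using D2(1) unfolding B sc5 by auto
    have "{a0,a1} = {b0,b1}" using D2(4) eD1 B by simp
    then have "(b0 = a0 \<and> b1 = a1) \<or> (b0 = a1 \<and> b1 = a0)" by (auto simp: doubleton_eq_iff)
    then show False
    proof
      assume o: "b0 = a0 \<and> b1 = a1"
      have "b2 = a2 \<and> b3 = a3 \<and> b4 = a4" by (rule c5[OF d1 E1]) (use d2 E2 o in auto)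
      then have "D2 = D1" using A B o by simp
      then show False using neq' by simp
    next
      assume o: "b0 = a1 \<and> b1 = a0"
      have "b2 = a4 \<and> b3 = a3 \<and> b4 = a2" by (rule c5[OF d1' E1']) (use d2 E2 o in auto)
      then have "cycle_edges D2 = cycle_edges D1" using A B o by (simp add: ce5 insert_commute)
      then show False using neq' by simp
    qed
  qed
qed

theorem lemma5p3:
  fixes V :: "'a set" and E :: "'a set set" and C1 C2 :: "'a list"
  assumes "simple_graph V E"
    and "planar V E"
    and "simple_cycle E C1" and "simple_cycle E C2"
    and "cycle_edges C1 \<noteq> cycle_edges C2"
    and "(length C1 = 5 \<and> length C2 \<le> 5) \<or> (length C2 = 5 \<and> length C1 \<le> 5)"
    and "\<forall>C. simple_cycle E C \<and> length C \<le> 10 \<longrightarrow> \<not> removable E C"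
  shows "cycle_edges C1 \<inter> cycle_edges C2 = {}"
  using assms(6)
proof
  assume "length C1 = 5 \<and> length C2 \<le> 5"
  then show ?thesis using main_aux[OF assms(1,2,7,3,4,5)] by blast
next
  assume "length C2 = 5 \<and> length C1 \<le> 5"
  moreover have "cycle_edges C2 \<noteq> cycle_edges C1" using assms(5) by simp
  ultimately have "cycle_edges C2 \<inter> cycle_edges C1 = {}" using main_aux[OF assms(1,2,7,4,3)] by blast
  then show ?thesis by blast
qed

end
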